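(* For every positive integer $T$ there exist a state (a graph $G=(V,E)$ with positive vertex populations), a number of districts $k$, positive weights $\Theta=(\theta(i,j))_{i,j\in V}$, and a probability distribution $\mathcal{D}$ over valid redistricting maps such that, letting $f(A)=\mathbb{E}_{A'\sim\mathcal{D}}[d_\Theta(A,A')]$ be the medoid cost, $A^*$ a population medoid (a minimizer of $f$ over valid maps), and $A_1,\dots,A_T$ i.i.d. samples from $\mathcal{D}$: (1) $\Pr\big[\min_{A\in\{A_1,\dots,A_T\}} d_\Theta(A,A^* )\ge 0.331\big]\ge\frac{2}{3}$, and (2) $\Pr\big[\min_{A\in\{A_1,\dots,A_T\}} f(A)\ge 1.1\, f(A^* )\big]\ge\frac{2}{3}$.
   Context: A redistricting map is a partition of $V$ into $k$ nonempty pairwise disjoint districts; a map is valid if its districts are contiguous in $G$, have approximately equal total population, and satisfy any other fixed validity constraints. Maps are identified with adjacency matrices $A$, $A(i,j)=1$ iff $i,j$ lie in the same district and $0$ otherwise. $d_\Theta(A_1,A_2)=\frac{1}{2}\sum_{i,j\in V}\theta(i,j)|A_1(i,j)-A_2(i,j)|$, summing over ordered pairs. *)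

theory Defs
  imports "HOL-Probability.Probability"
begin

definition is_state :: "nat set \<Rightarrow> (nat \<times> nat) set \<Rightarrow> (nat \<Rightarrow> real) \<Rightarrow> bool" where
  "is_state V E pop \<longleftrightarrow> finite V \<and> E \<subseteq> V \<times> V \<and> sym E \<and> irrefl E
     \<and> (\<forall>v\<in>V. pop v > 0)"

definition is_map :: "nat set \<Rightarrow> nat \<Rightarrow> nat set set \<Rightarrow> bool" where
  "is_map V k P \<longleftrightarrow> \<Union>P = V \<and> (\<forall>D\<in>P. D \<noteq> {})
     \<and> (\<forall>D1\<in>P. \<forall>D2\<in>P. D1 \<noteq> D2 \<longrightarrow> D1 \<inter> D2 = {}) \<and> finite P \<and> card P = k"

definition contiguous :: "(nat \<times> nat) set \<Rightarrow> nat set \<Rightarrow> bool" where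
  "contiguous E D \<longleftrightarrow> (\<forall>u\<in>D. \<forall>v\<in>D. (u, v) \<in> (E \<inter> D \<times> D)\<^sup>*)"

definition district_pop :: "(nat \<Rightarrow> real) \<Rightarrow> nat set \<Rightarrow> real" where
  "district_pop pop D = (\<Sum>v\<in>D. pop v)"

definition valid_map ::
  "nat set \<Rightarrow> (nat \<times> nat) set \<Rightarrow> (nat \<Rightarrow> real) \<Rightarrow> nat \<Rightarrow> real \<Rightarrow> nat set set \<Rightarrow> bool" where
  "valid_map V E pop k eps P \<longleftrightarrow> is_map V k P \<and> (\<forall>D\<in>P. contiguous E D)
     \<and> (\<forall>D\<in>P. \<bar>district_pop pop D - district_pop pop V / real k\<bar>
                \<le> eps * (district_pop pop V / real k))"

definition adj :: "nat set set \<Rightarrow> nat \<Rightarrow> nat \<Rightarrow> real" where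
  "adj P i j = (if \<exists>D\<in>P. i \<in> D \<and> j \<in> D then 1 else 0)"

definition dTheta :: "nat set \<Rightarrow> (nat \<Rightarrow> nat \<Rightarrow> real) \<Rightarrow> nat set set \<Rightarrow> nat set set \<Rightarrow> real" where
  "dTheta V \<theta> A1 A2 = (1/2) * (\<Sum>i\<in>V. \<Sum>j\<in>V. \<theta> i j * \<bar>adj A1 i j - adj A2 i j\<bar>)"

definition medoid_cost ::
  "nat set \<Rightarrow> (nat \<Rightarrow> nat \<Rightarrow> real) \<Rightarrow> nat set set pmf \<Rightarrow> nat set set \<Rightarrow> real" where
  "medoid_cost V \<theta> \<D> A = measure_pmf.expectation \<D> (\<lambda>A'. dTheta V \<theta> A A')"

end

theory Submission imports Defs begin
definition "VV = {0,1,2,3,4::nat}"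
definition "EE = {(i,j). i\<in>VV \<and> j\<in>VV \<and> i\<noteq>j}"

lemma contig: "D \<subseteq> VV \<Longrightarrow> contiguous EE D"
  unfolding contiguous_def
proof (intro ballI)
  fix u v assume "D \<subseteq> VV" "u \<in> D" "v \<in> D"
  show "(u, v) \<in> (EE \<inter> D \<times> D)\<^sup>*"
  proof (cases "u = v")
    case False
    then have "(u,v) \<in> EE \<inter> D \<times> D" using \<open>D \<subseteq> VV\<close> \<open>u \<in> D\<close> \<open>v \<in> D\<close> by (auto simp: EE_def)
    then show ?thesis by blast
  qed simp
qed

lemma validI:
  assumes "\<Union>P = VV" "\<forall>D\<in>P. D \<noteq> {}" "\<forall>D1\<in>P. \<forall>D2\<in>P. D1 = D2 \<or> D1 \<inter> D2 = {}"
    "finite P" "card P = 3" "\<forall>D\<in>P. 1 \<le> card D \<and> card D \<le> 3"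
  shows "valid_map VV EE (\<lambda>_. 1) 3 1 P"
proof -
  have sub: "\<forall>D\<in>P. D \<subseteq> VV" using assms(1) by blast
  have pV: "district_pop (\<lambda>_. 1) VV = 5" by (simp add: district_pop_def VV_def)
  have "\<forall>D\<in>P. \<bar>district_pop (\<lambda>_. 1) D - district_pop (\<lambda>_. 1) VV / real 3\<bar>
                \<le> 1 * (district_pop (\<lambda>_. 1) VV / real 3)"
  proof
    fix D assume "D \<in> P"
    then have "1 \<le> card D" "card D \<le> 3" using assms(6) by auto
    then have r: "1 \<le> real (card D)" "real (card D) \<le> 3" by simp_all
    have "\<bar>real (card D) - 5 / 3\<bar> * 3 \<le> 5"
      using r by (cases "real (card D) \<le> 5/3") (simp_all add: abs_if)
    then show "\<bar>district_pop (\<lambda>_. 1) D - district_pop (\<lambda>_. 1) VV / real 3\<bar>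
                \<le> 1 * (district_pop (\<lambda>_. 1) VV / real 3)"
      unfolding pV by (simp add: district_pop_def abs_le_iff)
  qed
  moreover have "is_map VV 3 P" unfolding is_map_def using assms by blast
  moreover have "\<forall>D\<in>P. contiguous EE D" using sub contig by blast
  ultimately show ?thesis unfolding valid_map_def by blast
qed

definition "MA = {{0,1,2},{3},{4::nat}}"
definition "MB = {{0,1,3},{2},{4::nat}}"
definition "MC = {{0,4},{1},{2,3::nat}}"
definition "MX = {{0,1},{2,3},{4::nat}}"

lemma vA: "valid_map VV EE (\<lambda>_. 1) 3 1 MA"
  apply (rule validI) apply (simp_all add: MA_def VV_def singleton_insert_inj_eq' doubleton_eq_iff) by auto
lemma vB: "valid_map VV EE (\<lambda>_. 1) 3 1 MB"
  apply (rule validI) apply (simp_all add: MB_def VV_def singleton_insert_inj_eq' doubleton_eq_iff) by auto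
lemma vC: "valid_map VV EE (\<lambda>_. 1) 3 1 MC"
  apply (rule validI) apply (simp_all add: MC_def VV_def singleton_insert_inj_eq' doubleton_eq_iff) by auto
lemma vX: "valid_map VV EE (\<lambda>_. 1) 3 1 MX"
  apply (rule validI) apply (simp_all add: MX_def VV_def singleton_insert_inj_eq' doubleton_eq_iff) by auto

lemma dsym: "dTheta V \<theta> X Y = dTheta V \<theta> Y X"
  unfolding dTheta_def by (simp add: abs_minus_commute)

lemma dself: "dTheta V \<theta> X X = 0"
  unfolding dTheta_def by simp

lemma dtri: assumes "\<forall>i\<in>V. \<forall>j\<in>V. \<theta> i j > 0"
  shows "dTheta V \<theta> X Z \<le> dTheta V \<theta> X Y + dTheta V \<theta> Y Z"
proof -
  have "(\<Sum>i\<in>V. \<Sum>j\<in>V. \<theta> i j * \<bar>adj X i j - adj Z i j\<bar>) \<le>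
        (\<Sum>i\<in>V. \<Sum>j\<in>V. \<theta> i j * \<bar>adj X i j - adj Y i j\<bar> + \<theta> i j * \<bar>adj Y i j - adj Z i j\<bar>)"
  proof (intro sum_mono)
    fix i j assume "i \<in> V" "j \<in> V"
    then have "\<theta> i j \<ge> 0" using assms by fastforce
    then have "\<theta> i j * \<bar>adj X i j - adj Z i j\<bar> \<le> \<theta> i j * (\<bar>adj X i j - adj Y i j\<bar> + \<bar>adj Y i j - adj Z i j\<bar>)"
      by (intro mult_left_mono) auto
    then show "\<theta> i j * \<bar>adj X i j - adj Z i j\<bar> \<le> \<theta> i j * \<bar>adj X i j - adj Y i j\<bar> + \<theta> i j * \<bar>adj Y i j - adj Z i j\<bar>"
      by (simp add: algebra_simps)
  qed
  then show ?thesis unfolding dTheta_def by (simp add: sum.distrib)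
qed

lemma neqs: "MA \<noteq> MB" "MA \<noteq> MC" "MB \<noteq> MC"
proof -
  have "adj MA 0 2 = 1" "adj MB 0 2 = 0" "adj MC 0 2 = 0" "adj MB 0 1 = 1" "adj MC 0 1 = 0"
    by (simp_all add: adj_def MA_def MB_def MC_def)
  then show "MA \<noteq> MB" "MA \<noteq> MC" "MB \<noteq> MC" by auto
qed

definition "SS = {MA,MB,MC}"
lemma SS3: "card SS = 3" using neqs by (simp add: SS_def)
lemma SSfin: "finite SS" "SS \<noteq> {}" by (auto simp: SS_def)

lemma cost: "medoid_cost V \<theta> (pmf_of_set SS) A = (\<Sum>A'\<in>SS. dTheta V \<theta> A A') / 3"
  unfolding medoid_cost_def using SSfin SS3 by (simp add: integral_pmf_of_set)

lemma cost_tri: assumes "\<forall>i\<in>V. \<forall>j\<in>V. \<theta> i j > 0"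
  shows "medoid_cost V \<theta> (pmf_of_set SS) A \<le> dTheta V \<theta> A Y + medoid_cost V \<theta> (pmf_of_set SS) Y"
proof -
  have "(\<Sum>A'\<in>SS. dTheta V \<theta> A A') \<le> (\<Sum>A'\<in>SS. dTheta V \<theta> A Y + dTheta V \<theta> Y A')"
    by (intro sum_mono dtri assms)
  also have "\<dots> = 3 * dTheta V \<theta> A Y + (\<Sum>A'\<in>SS. dTheta V \<theta> Y A')"
    by (simp add: sum.distrib SS3)
  finally show ?thesis unfolding cost by simp
qed

definition th :: "nat \<Rightarrow> nat \<Rightarrow> real" where "th = (\<lambda>_ _. 1)"
lemma dAB: "dTheta VV th MA MB = 4" by (simp add: th_def dTheta_def adj_def VV_def MA_def MB_def)
lemma dAC: "dTheta VV th MA MC = 5" by (simp add: th_def dTheta_def adj_def VV_def MA_def MC_def)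
lemma dBC: "dTheta VV th MB MC = 5" by (simp add: th_def dTheta_def adj_def VV_def MB_def MC_def)
lemma dXA: "dTheta VV th MX MA = 3" by (simp add: th_def dTheta_def adj_def VV_def MX_def MA_def)
lemma dXB: "dTheta VV th MX MB = 3" by (simp add: th_def dTheta_def adj_def VV_def MX_def MB_def)
lemma dXC: "dTheta VV th MX MC = 2" by (simp add: th_def dTheta_def adj_def VV_def MX_def MC_def)

lemma fX: "medoid_cost VV th (pmf_of_set SS) MX = 8/3"
  apply (subst cost) using neqs by (simp add: SS_def dXA dXB dXC)

lemma sumSS: "(\<Sum>A'\<in>SS. (g::nat set set \<Rightarrow> real) A') = g MA + g MB + g MC"
  using neqs by (simp add: SS_def add_ac)

lemma fS: "s \<in> SS \<Longrightarrow> medoid_cost VV th (pmf_of_set SS) s \<ge> 3"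
proof -
  assume "s \<in> SS"
  then have "s = MA \<or> s = MB \<or> s = MC" by (simp add: SS_def)
  moreover have "dTheta VV th MB MA = 4" "dTheta VV th MC MA = 5" "dTheta VV th MC MB = 5"
    using dAB dAC dBC dsym by metis+
  ultimately show ?thesis
    unfolding cost sumSS using dAB dAC dBC dself[of VV th] by auto
qed

lemma thpos: "\<forall>i\<in>VV. \<forall>j\<in>VV. th i j > 0" by (simp add: th_def)

lemma SSvalid: "set_pmf (pmf_of_set SS) \<subseteq> {A. valid_map VV EE (\<lambda>_. 1) 3 1 A}"
  using SSfin vA vB vC by (auto simp: SS_def)


lemma t1: "\<forall>s\<in>set_pmf (Pi_pmf {..<(T::nat)} {} (\<lambda>_. pmf_of_set SS)). \<forall>i\<in>{..<T}. s i \<in> SS"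
    using SSfin set_Pi_pmf[OF finite_lessThan[of T], of "{}" "\<lambda>_. pmf_of_set SS"] by (auto simp: PiE_dflt_def)
lemma t2: "measure_pmf.prob (Pi_pmf {..<(T::nat)} {} (\<lambda>_. pmf_of_set SS)) {s. Q s} = 1" if "\<forall>s\<in>set_pmf (Pi_pmf {..<T} {} (\<lambda>_. pmf_of_set SS)). Q s" for Q
    using that by (subst measure_pmf.prob_eq_1) (auto simp: AE_measure_pmf_iff)

lemma m1:
  assumes "valid_map VV EE (\<lambda>_. 1) 3 1 Astar"
       "\<forall>A. valid_map VV EE (\<lambda>_. 1) 3 1 A \<longrightarrow> medoid_cost VV th (pmf_of_set SS) Astar \<le> medoid_cost VV th (pmf_of_set SS) A"
  shows "medoid_cost VV th (pmf_of_set SS) Astar \<le> 8/3"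
proof -
    have "medoid_cost VV th (pmf_of_set SS) Astar \<le> medoid_cost VV th (pmf_of_set SS) MX" using assms(2) vX by blast
    then show "medoid_cost VV th (pmf_of_set SS) Astar \<le> 8/3" unfolding fX .
qed
lemma m2: assumes "medoid_cost VV th (pmf_of_set SS) Astar \<le> 8/3" "s \<in> SS"
  shows "dTheta VV th s Astar \<ge> 0.331"
proof -
  have "(0.331::real) = 331/1000" by simp
  then show ?thesis using cost_tri[OF thpos, of s Astar] fS[OF assms(2)] assms(1) by linarith
qed
lemma m3: assumes "medoid_cost VV th (pmf_of_set SS) Astar \<le> 8/3" "s \<in> SS"
  shows "medoid_cost VV th (pmf_of_set SS) s \<ge> 1.1 * medoid_cost VV th (pmf_of_set SS) Astar"
proof -
  have "(1.1::real) = 11/10" by simp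
  then show ?thesis using fS[OF assms(2)] assms(1) by linarith
qed
lemma m4: assumes "\<forall>s\<in>S. \<forall>i\<in>{..<(T::nat)}. s i \<in> SS" "\<And>s. s \<in> SS \<Longrightarrow> (c::real) \<le> g s" "T > 0"
  shows "\<forall>s\<in>S. Min ((\<lambda>i. g (s i)) ` {..<T}) \<ge> c"
proof
  fix s assume "s \<in> S"
  show "Min ((\<lambda>i. g (s i)) ` {..<T}) \<ge> c"
    using assms \<open>s \<in> S\<close> by (subst Min_ge_iff) auto
qed
theorem theorem3:
  fixes T :: nat
  assumes "T > 0"
  shows "\<exists>V E pop k eps \<theta> \<D>.
     is_state V E pop \<and> eps \<ge> 0 \<and> (\<forall>i\<in>V. \<forall>j\<in>V. \<theta> i j > 0)
     \<and> set_pmf \<D> \<subseteq> {A. valid_map V E pop k eps A}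
     \<and> (\<forall>Astar. valid_map V E pop k eps Astar
          \<and> (\<forall>A. valid_map V E pop k eps A \<longrightarrow> medoid_cost V \<theta> \<D> Astar \<le> medoid_cost V \<theta> \<D> A)
        \<longrightarrow>
          measure_pmf.prob (Pi_pmf {..<T} {} (\<lambda>_. \<D>))
             {s. Min ((\<lambda>i. dTheta V \<theta> (s i) Astar) ` {..<T}) \<ge> 0.331} \<ge> 2/3
        \<and> measure_pmf.prob (Pi_pmf {..<T} {} (\<lambda>_. \<D>))
             {s. Min ((\<lambda>i. medoid_cost V \<theta> \<D> (s i)) ` {..<T})
                   \<ge> 1.1 * medoid_cost V \<theta> \<D> Astar} \<ge> 2/3)"
proof -
  have st: "is_state VV EE (\<lambda>_. 1)"
    unfolding is_state_def by (auto simp: EE_def sym_def irrefl_def) (simp add: VV_def)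
  let ?D = "pmf_of_set SS"
  let ?P = "Pi_pmf {..<T} {} (\<lambda>_. ?D)"
  note supp = t1[of T]
  have main: "measure_pmf.prob ?P
             {s. Min ((\<lambda>i. dTheta VV th (s i) Astar) ` {..<T}) \<ge> 0.331} \<ge> 2/3
        \<and> measure_pmf.prob ?P
             {s. Min ((\<lambda>i. medoid_cost VV th ?D (s i)) ` {..<T})
                   \<ge> 1.1 * medoid_cost VV th ?D Astar} \<ge> 2/3"
    if "valid_map VV EE (\<lambda>_. 1) 3 1 Astar"
       "\<forall>A. valid_map VV EE (\<lambda>_. 1) 3 1 A \<longrightarrow> medoid_cost VV th ?D Astar \<le> medoid_cost VV th ?D A"
    for Astar
  proof -
    have fA: "medoid_cost VV th ?D Astar \<le> 8/3" by (rule m1[OF that])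
    have a1: "\<forall>s\<in>set_pmf ?P. Min ((\<lambda>i. dTheta VV th (s i) Astar) ` {..<T}) \<ge> 0.331"
      by (rule m4[where g="\<lambda>X. dTheta VV th X Astar", OF supp _ assms]) (rule m2[OF fA])
    have a2: "\<forall>s\<in>set_pmf ?P. Min ((\<lambda>i. medoid_cost VV th ?D (s i)) ` {..<T})
                   \<ge> 1.1 * medoid_cost VV th ?D Astar"
      by (rule m4[where g="\<lambda>X. medoid_cost VV th ?D X", OF supp _ assms]) (rule m3[OF fA])
    have "measure_pmf.prob ?P
             {s. Min ((\<lambda>i. dTheta VV th (s i) Astar) ` {..<T}) \<ge> 0.331} = 1"
      by (rule t2) (rule a1)
    moreover have "measure_pmf.prob ?P
             {s. Min ((\<lambda>i. medoid_cost VV th ?D (s i)) ` {..<T})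
                   \<ge> 1.1 * medoid_cost VV th ?D Astar} = 1"
      by (rule t2) (rule a2)
    ultimately show ?thesis by simp
  qed
  show ?thesis
    apply (rule exI[of _ VV], rule exI[of _ EE], rule exI[of _ "\<lambda>_. 1"], rule exI[of _ 3],
           rule exI[of _ 1], rule exI[of _ th], rule exI[of _ ?D])
    apply (intro conjI allI impI)
    subgoal by (rule st)
    subgoal by simp
    subgoal by (rule thpos)
    subgoal by (rule SSvalid)
    subgoal for Astar by (erule conjE) (drule main, assumption, erule conjunct1)
    subgoal for Astar by (erule conjE) (drule main, assumption, erule conjunct2)
    done
qed

end
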